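(* Let $d$ be a Hardy type series derivation on $\mathbb{K}$. Let $\alpha\in\Gamma$ with $\alpha\neq\hat\theta$ (this condition being vacuous if $\hat\theta$ does not exist). Then there exists a unique fundamental monomial $\psi_\alpha\in\Phi$ such that $\mathrm{LF}\big(\alpha/\theta^{(\psi_\alpha)}\big)=\psi_\alpha$.
   Context: Let $(\Phi,\preccurlyeq)$ be a totally ordered set; $\mathbf{H}(\Phi)$ is the group of formal products $\gamma=\prod_{\phi}\phi^{\gamma_\phi}$, $\gamma_\phi\in\mathbb{R}$, with anti-well-ordered support $\operatorname{supp}\gamma=\{\phi:\gamma_\phi\neq0\}$, pointwise multiplication and anti-lexicographic order ($\gamma\succ1$ iff the exponent of $\max\operatorname{supp}\gamma$ is positive); $\Phi\subseteq\mathbf H(\Phi)$ via $\phi=\phi^1$ (fundamental monomials). Fix a subgroup $\Gamma\supseteq\Phi$. $\mathrm{LF}(\gamma)=\max\operatorname{supp}\gamma$ for $\gamma\ne1$, $\mathrm{LF}(1)=1$. $\mathbb{K}=\mathbb{R}((\Gamma))$: formal series with anti-well-ordered support in $\Gamma$; $\mathrm{LM}(a)$ = largest monomial of the support; $a\preccurlyeq b$ iff $\mathrm{LM}(a)\preccurlyeq\mathrm{LM}(b)$, $a\asymp b$ iff equal leading monomials; $|a|=\max(\mathrm{LM}(a),\mathrm{LM}(a)^{-1})$; $a,b\succ 1$ comparable iff $\mathrm{LF}(\mathrm{LM}(a))=\mathrm{LF}(\mathrm{LM}(b))$. Summable families: union of supports anti-well-ordered, each monomial in finitely many supports. A series derivation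 is a map $a\mapsto a'$ on $\mathbb{K}$ with $1'=0$, $\alpha'=\alpha\sum_{\phi\in\operatorname{supp}\alpha}\alpha_\phi\phi'/\phi$ for $\alpha=\prod\phi^{\alpha_\phi}\in\Gamma$, and $a'=\sum a_\alpha\alpha'$ (summable families). Hardy type: (HD1) constants are exactly $\mathbb{R}$; (HD2) for $a,b\in\mathbb{K}^*$, $a,b\not\asymp 1$: $a\preccurlyeq b\iff a'\preccurlyeq b'$; (HD3) for $|a|\succ|b|\succ1$: $a'/a\succcurlyeq b'/b$, with $\asymp$ iff $a,b$ comparable. $\theta^{(\phi)}=\mathrm{LM}(\phi'/\phi)$ for $\phi\in\Phi$; $\hat\theta$ is the greatest lower bound of $\{\theta^{(\phi)}:\phi\in\Phi\}$ in $(\Gamma,\preccurlyeq)$ if it exists. *)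

theory Defs
  imports Complex_Main
begin

text \<open>A monomial gamma = prod phi^(gamma_phi) in H(Phi) is represented by its exponent
 function 'a => real; the group H(Phi) is written additively on exponents:
 product = pointwise sum, 1 = constant 0, inverse = negation.
 A series in R((Gamma)) is a function from monomials to real coefficients.\<close>

type_synonym 'a mono = "'a \<Rightarrow> real"
type_synonym 'a ser = "'a mono \<Rightarrow> real"

definition antiwo :: "('b \<Rightarrow> 'b \<Rightarrow> bool) \<Rightarrow> 'b set \<Rightarrow> bool" where
  "antiwo le S \<longleftrightarrow> (\<forall>T. T \<subseteq> S \<longrightarrow> T \<noteq> {} \<longrightarrow> (\<exists>m\<in>T. \<forall>t\<in>T. le t m))"

definition msupp :: "'a mono \<Rightarrow> 'a set" where
  "msupp \<gamma> = {x. \<gamma> x \<noteq> 0}"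

definition hahn :: "'a::linorder set \<Rightarrow> 'a mono set" where
  "hahn Phi = {\<gamma>. msupp \<gamma> \<subseteq> Phi \<and> antiwo (\<le>) (msupp \<gamma>)}"

definition mone :: "'a mono" where "mone = (\<lambda>_. 0)"
definition mmul :: "'a mono \<Rightarrow> 'a mono \<Rightarrow> 'a mono" where "mmul \<gamma> \<delta> = (\<lambda>x. \<gamma> x + \<delta> x)"
definition minv :: "'a mono \<Rightarrow> 'a mono" where "minv \<gamma> = (\<lambda>x. - \<gamma> x)"
definition mdiv :: "'a mono \<Rightarrow> 'a mono \<Rightarrow> 'a mono" where "mdiv \<gamma> \<delta> = mmul \<gamma> (minv \<delta>)"

definition fund :: "'a \<Rightarrow> 'a mono" where
  "fund \<phi> = (\<lambda>x. if x = \<phi> then 1 else 0)"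

definition maxsupp :: "'a::linorder mono \<Rightarrow> 'a" where
  "maxsupp \<gamma> = (GREATEST x. \<gamma> x \<noteq> 0)"

definition LF :: "'a::linorder mono \<Rightarrow> 'a mono" where
  "LF \<gamma> = (if \<gamma> = mone then mone else fund (maxsupp \<gamma>))"

definition mpos :: "'a::linorder mono \<Rightarrow> bool" where
  "mpos \<gamma> \<longleftrightarrow> \<gamma> \<noteq> mone \<and> \<gamma> (maxsupp \<gamma>) > 0"

definition mless :: "'a::linorder mono \<Rightarrow> 'a mono \<Rightarrow> bool" where
  "mless \<gamma> \<delta> \<longleftrightarrow> mpos (mdiv \<delta> \<gamma>)"

definition mle :: "'a::linorder mono \<Rightarrow> 'a mono \<Rightarrow> bool" where
  "mle \<gamma> \<delta> \<longleftrightarrow> \<gamma> = \<delta> \<or> mless \<gamma> \<delta>"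

definition absm :: "'a::linorder mono \<Rightarrow> 'a mono" where
  "absm \<gamma> = (if mle mone \<gamma> then \<gamma> else minv \<gamma>)"

definition value_group :: "'a::linorder set \<Rightarrow> 'a mono set \<Rightarrow> bool" where
  "value_group Phi G \<longleftrightarrow> G \<subseteq> hahn Phi \<and> mone \<in> G \<and>
     (\<forall>x\<in>G. \<forall>y\<in>G. mmul x y \<in> G) \<and> (\<forall>x\<in>G. minv x \<in> G) \<and> fund ` Phi \<subseteq> G"

definition ssupp :: "'a ser \<Rightarrow> 'a mono set" where
  "ssupp a = {m. a m \<noteq> 0}"

definition Kser :: "'a::linorder mono set \<Rightarrow> 'a ser set" where
  "Kser G = {a. ssupp a \<subseteq> G \<and> antiwo mle (ssupp a)}"

definition LM :: "'a::linorder ser \<Rightarrow> 'a mono" where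
  "LM a = (THE m. a m \<noteq> 0 \<and> (\<forall>n. a n \<noteq> 0 \<longrightarrow> mle n m))"

definition smon :: "'a mono \<Rightarrow> 'a ser" where
  "smon \<gamma> = (\<lambda>m. if m = \<gamma> then 1 else 0)"
definition sone :: "'a ser" where "sone = smon mone"
definition szero :: "'a ser" where "szero = (\<lambda>_. 0)"
definition sscale :: "real \<Rightarrow> 'a ser \<Rightarrow> 'a ser" where
  "sscale c a = (\<lambda>m. c * a m)"

text \<open>Product of the monomial gamma with the series a.\<close>
definition mshift :: "'a mono \<Rightarrow> 'a ser \<Rightarrow> 'a ser" where
  "mshift \<gamma> a = (\<lambda>m. a (mdiv m \<gamma>))"

definition summable_fam :: "'i set \<Rightarrow> ('i \<Rightarrow> 'a::linorder ser) \<Rightarrow> bool" where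
  "summable_fam I f \<longleftrightarrow> antiwo mle (\<Union>i\<in>I. ssupp (f i)) \<and> (\<forall>m. finite {i\<in>I. f i m \<noteq> 0})"

definition fam_sum :: "'i set \<Rightarrow> ('i \<Rightarrow> 'a ser) \<Rightarrow> 'a ser" where
  "fam_sum I f = (\<lambda>m. \<Sum>i\<in>{i\<in>I. f i m \<noteq> 0}. f i m)"

text \<open>phi'/phi for a fundamental monomial phi.\<close>
definition fdl :: "('a ser \<Rightarrow> 'a ser) \<Rightarrow> 'a \<Rightarrow> 'a ser" where
  "fdl D \<phi> = mshift (minv (fund \<phi>)) (D (smon (fund \<phi>)))"

definition series_derivation :: "'a::linorder set \<Rightarrow> 'a mono set \<Rightarrow> ('a ser \<Rightarrow> 'a ser) \<Rightarrow> bool" where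
  "series_derivation Phi G D \<longleftrightarrow>
     (\<forall>a\<in>Kser G. D a \<in> Kser G) \<and>
     D sone = szero \<and>
     (\<forall>\<alpha>\<in>G. summable_fam (msupp \<alpha>) (\<lambda>\<phi>. sscale (\<alpha> \<phi>) (fdl D \<phi>)) \<and>
        D (smon \<alpha>) = mshift \<alpha> (fam_sum (msupp \<alpha>) (\<lambda>\<phi>. sscale (\<alpha> \<phi>) (fdl D \<phi>)))) \<and>
     (\<forall>a\<in>Kser G. summable_fam (ssupp a) (\<lambda>\<alpha>. sscale (a \<alpha>) (D (smon \<alpha>))) \<and>
        D a = fam_sum (ssupp a) (\<lambda>\<alpha>. sscale (a \<alpha>) (D (smon \<alpha>))))"

definition ser_le :: "'a::linorder ser \<Rightarrow> 'a ser \<Rightarrow> bool" where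
  "ser_le a b \<longleftrightarrow> mle (LM a) (LM b)"
definition ser_asymp :: "'a::linorder ser \<Rightarrow> 'a ser \<Rightarrow> bool" where
  "ser_asymp a b \<longleftrightarrow> LM a = LM b"

definition sabs :: "'a::linorder ser \<Rightarrow> 'a mono" where
  "sabs a = absm (LM a)"

text \<open>LM(a'/a) = LM(a') / LM(a) (leading monomials are multiplicative on K*).\<close>
definition LM_logder :: "('a::linorder ser \<Rightarrow> 'a ser) \<Rightarrow> 'a ser \<Rightarrow> 'a mono" where
  "LM_logder D a = mdiv (LM (D a)) (LM a)"

definition hardy_type :: "'a::linorder set \<Rightarrow> 'a mono set \<Rightarrow> ('a ser \<Rightarrow> 'a ser) \<Rightarrow> bool" where
  "hardy_type Phi G D \<longleftrightarrow>
     (\<forall>a\<in>Kser G. D a = szero \<longleftrightarrow> (\<exists>c. a = sscale c sone)) \<and>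
     (\<forall>a\<in>Kser G. \<forall>b\<in>Kser G. a \<noteq> szero \<longrightarrow> b \<noteq> szero \<longrightarrow>
        \<not> ser_asymp a sone \<longrightarrow> \<not> ser_asymp b sone \<longrightarrow>
        (ser_le a b \<longleftrightarrow> ser_le (D a) (D b))) \<and>
     (\<forall>a\<in>Kser G. \<forall>b\<in>Kser G. a \<noteq> szero \<longrightarrow> b \<noteq> szero \<longrightarrow>
        mless (sabs b) (sabs a) \<longrightarrow> mless mone (sabs b) \<longrightarrow>
        (mle (LM_logder D b) (LM_logder D a) \<and>
         (LM_logder D a = LM_logder D b \<longleftrightarrow> LF (sabs a) = LF (sabs b))))"

definition theta :: "('a::linorder ser \<Rightarrow> 'a ser) \<Rightarrow> 'a \<Rightarrow> 'a mono" where
  "theta D \<phi> = LM (fdl D \<phi>)"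

definition is_theta_hat :: "'a::linorder set \<Rightarrow> 'a mono set \<Rightarrow> ('a ser \<Rightarrow> 'a ser) \<Rightarrow> 'a mono \<Rightarrow> bool" where
  "is_theta_hat Phi G D t \<longleftrightarrow> t \<in> G \<and> (\<forall>\<phi>\<in>Phi. mle t (theta D \<phi>)) \<and>
     (\<forall>s\<in>G. (\<forall>\<phi>\<in>Phi. mle s (theta D \<phi>)) \<longrightarrow> mle s t)"

end

theory Submission
  imports Defs
begin


lemma mdiv_apply[simp]: "mdiv a b x = a x - b x" by (simp add: mdiv_def mmul_def minv_def)
lemma mmul_apply[simp]: "mmul a b x = a x + b x" by (simp add: mmul_def)
lemma minv_apply[simp]: "minv a x = - a x" by (simp add: minv_def)
lemma mone_apply[simp]: "mone x = 0" by (simp add: mone_def)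
lemma fund_apply: "fund p x = (if x = p then 1 else 0)" by (simp add: fund_def)

definition isTop :: "'a::linorder mono \<Rightarrow> 'a \<Rightarrow> bool" where
  "isTop h x \<longleftrightarrow> h x \<noteq> 0 \<and> (\<forall>y. x < y \<longrightarrow> h y = 0)"

lemma isTop_maxsupp:
  assumes "isTop h x" shows "maxsupp h = x" "h \<noteq> mone"
proof -
  show "maxsupp h = x" unfolding maxsupp_def
  proof (rule Greatest_equality)
    show "h x \<noteq> 0" using assms unfolding isTop_def by auto
    fix y assume "h y \<noteq> 0" then show "y \<le> x" using assms unfolding isTop_def
      by (metis not_le)
  qed
  show "h \<noteq> mone" using assms unfolding isTop_def by auto
qed

lemma hahn_top:
  assumes "h \<in> hahn Phi" "h \<noteq> mone"
  shows "isTop h (maxsupp h)" "maxsupp h \<in> Phi"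
proof -
  have "msupp h \<noteq> {}" using assms(2) unfolding msupp_def by (auto simp: fun_eq_iff)
  then obtain m where m: "m \<in> msupp h" "\<forall>t\<in>msupp h. t \<le> m"
    using assms(1) unfolding hahn_def antiwo_def by blast
  have t: "isTop h m" using m unfolding isTop_def msupp_def by (auto simp: not_le[symmetric])
  then have e: "maxsupp h = m" by (rule isTop_maxsupp)
  then show "isTop h (maxsupp h)" using t by simp
  show "maxsupp h \<in> Phi" using m assms(1) e unfolding hahn_def by auto
qed

lemma mpos_I: "isTop h x \<Longrightarrow> h x > 0 \<Longrightarrow> mpos h"
  unfolding mpos_def using isTop_maxsupp by metis

lemma not_mpos_I: "isTop h x \<Longrightarrow> h x < 0 \<Longrightarrow> \<not> mpos h"
  unfolding mpos_def using isTop_maxsupp by fastforce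

lemma mpos_top: "h \<in> hahn Phi \<Longrightarrow> mpos h \<Longrightarrow> isTop h (maxsupp h) \<and> h (maxsupp h) > 0 \<and> maxsupp h \<in> Phi"
  unfolding mpos_def using hahn_top by metis

lemma maxsupp_minv: "maxsupp (minv h) = maxsupp h"
  unfolding maxsupp_def by simp

lemma not_mpos_both: "mpos h \<Longrightarrow> mpos (minv h) \<Longrightarrow> False"
  unfolding mpos_def using maxsupp_minv[of h] by simp

lemma mpos_mone: "\<not> mpos mone" unfolding mpos_def by simp

lemma mdiv_swap: "mdiv x y = minv (mdiv y x)" by (simp add: fun_eq_iff)

lemma mle_antisym: "mle x y \<Longrightarrow> mless y x \<Longrightarrow> False"
proof -
  assume a: "mle x y" "mless y x"
  show False
  proof (cases "x = y")
    case True
    have "mdiv x x = mone" by (simp add: fun_eq_iff)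
    then show False using a True mpos_mone unfolding mless_def by auto
  next
    case False
    then have "mpos (mdiv y x)" "mpos (mdiv x y)" using a unfolding mle_def mless_def by auto
    then show False using not_mpos_both mdiv_swap by metis
  qed
qed

lemma mle_antisym_eq: "mle x y \<Longrightarrow> mle y x \<Longrightarrow> x = y"
  using mle_antisym unfolding mle_def by blast

lemma mle_trans_mul: "mle (mmul x c) (mmul y c) \<longleftrightarrow> mle x y"
proof -
  have 1: "mdiv (mmul y c) (mmul x c) = mdiv y x" by (simp add: fun_eq_iff)
  have 2: "mmul x c = mmul y c \<longleftrightarrow> x = y" by (auto simp: fun_eq_iff)
  show ?thesis unfolding mle_def mless_def 1 2 ..
qed

lemma LM_eq: "a m \<noteq> 0 \<Longrightarrow> (\<forall>n. a n \<noteq> 0 \<longrightarrow> mle n m) \<Longrightarrow> LM a = m"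
  unfolding LM_def by (rule the_equality) (auto intro: mle_antisym_eq)

lemma LM_smon: "LM (smon g) = g"
  by (rule LM_eq) (auto simp: smon_def mle_def)

lemma LM_shift:
  assumes "a m0 \<noteq> 0" "\<forall>n. a n \<noteq> 0 \<longrightarrow> mle n m0"
  shows "LM (mshift (minv f) a) = mdiv m0 f"
proof (rule LM_eq)
  have "mdiv (mdiv m0 f) (minv f) = m0" by (simp add: fun_eq_iff)
  then show "mshift (minv f) a (mdiv m0 f) \<noteq> 0" using assms(1) by (simp add: mshift_def)
  show "\<forall>n. mshift (minv f) a n \<noteq> 0 \<longrightarrow> mle n (mdiv m0 f)"
  proof (intro allI impI)
    fix n assume "mshift (minv f) a n \<noteq> 0"
    then have "a (mdiv n (minv f)) \<noteq> 0" by (simp add: mshift_def)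
    then have "mle (mdiv n (minv f)) m0" using assms(2) by blast
    moreover have "mdiv n (minv f) = mmul n f" "m0 = mmul (mdiv m0 f) f" by (simp_all add: fun_eq_iff)
    ultimately show "mle n (mdiv m0 f)" using mle_trans_mul by metis
  qed
qed

lemma fund_top: "isTop (fund p) p" unfolding isTop_def fund_def by auto
lemma LF_fund: "LF (fund p) = fund p"
  using isTop_maxsupp[OF fund_top[of p]] unfolding LF_def by simp
lemma fund_inj: "fund p = fund q \<Longrightarrow> p = q"
  unfolding fund_def by (metis one_neq_zero)
lemma fund_pos: "mpos (fund p)" using mpos_I[OF fund_top] by (simp add: fund_def)
lemma mdiv_mone: "mdiv x mone = x" by (simp add: fun_eq_iff)
lemma absm_pos: "mpos g \<Longrightarrow> absm g = g"
  unfolding absm_def mle_def mless_def mdiv_mone by simp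



locale hs =
  fixes Phi :: "'a::linorder set" and G :: "'a mono set" and D :: "'a ser \<Rightarrow> 'a ser"
  assumes vg: "value_group Phi G" and sd: "series_derivation Phi G D" and ht: "hardy_type Phi G D"
begin

lemma G_hahn: "x \<in> G \<Longrightarrow> x \<in> hahn Phi" using vg unfolding value_group_def by auto
lemma G_mul: "x \<in> G \<Longrightarrow> y \<in> G \<Longrightarrow> mmul x y \<in> G" using vg unfolding value_group_def by auto
lemma G_inv: "x \<in> G \<Longrightarrow> minv x \<in> G" using vg unfolding value_group_def by auto
lemma G_div: "x \<in> G \<Longrightarrow> y \<in> G \<Longrightarrow> mdiv x y \<in> G" unfolding mdiv_def using G_mul G_inv by auto
lemma G_fund: "p \<in> Phi \<Longrightarrow> fund p \<in> G" using vg unfolding value_group_def by auto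

lemma total: assumes "x \<in> G" "y \<in> G" shows "mle x y \<or> mless y x"
proof -
  let ?h = "mdiv y x"
  have h: "?h \<in> hahn Phi" using G_div G_hahn assms by blast
  show ?thesis
  proof (cases "?h = mone")
    case True then have "x = y" by (auto simp: fun_eq_iff dest: fun_cong)
    then show ?thesis by (simp add: mle_def)
  next
    case False
    then have t: "isTop ?h (maxsupp ?h)" using hahn_top h by blast
    then have "?h (maxsupp ?h) > 0 \<or> ?h (maxsupp ?h) < 0" unfolding isTop_def by linarith
    then show ?thesis
    proof
      assume "?h (maxsupp ?h) > 0" then have "mless x y" unfolding mless_def using mpos_I t by blast
      then show ?thesis by (simp add: mle_def)
    next
      assume "?h (maxsupp ?h) < 0"
      moreover have "mdiv x y = minv ?h" using mdiv_swap by blast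
      moreover have "isTop (minv ?h) (maxsupp ?h)" using t unfolding isTop_def by simp
      ultimately have "mpos (mdiv x y)" using mpos_I[of "minv ?h" "maxsupp ?h"] by simp
      then have "mless y x" unfolding mless_def .
      then show ?thesis by simp
    qed
  qed
qed

lemma smon_Kser: "g \<in> G \<Longrightarrow> smon g \<in> Kser G"
proof -
  assume g: "g \<in> G"
  have s: "ssupp (smon g) = {g}" by (auto simp: ssupp_def smon_def)
  have "antiwo mle {g}" unfolding antiwo_def
  proof (intro allI impI)
    fix T :: "'a mono set" assume "T \<subseteq> {g}" "T \<noteq> {}"
    then have "T = {g}" by blast
    then show "\<exists>m\<in>T. \<forall>t\<in>T. mle t m" by (simp add: mle_def)
  qed
  then show ?thesis using g s unfolding Kser_def by auto
qed

lemma smon_nz: "smon g \<noteq> szero" by (auto simp: smon_def szero_def fun_eq_iff)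

lemma LM_ex:
  assumes "a \<in> Kser G" "a \<noteq> szero"
  shows "a (LM a) \<noteq> 0 \<and> (\<forall>n. a n \<noteq> 0 \<longrightarrow> mle n (LM a)) \<and> LM a \<in> G"
proof -
  have "ssupp a \<noteq> {}" using assms(2) by (auto simp: ssupp_def szero_def fun_eq_iff)
  moreover have "antiwo mle (ssupp a)" using assms(1) unfolding Kser_def by blast
  ultimately obtain m where m: "m \<in> ssupp a" "\<forall>t\<in>ssupp a. mle t m"
    unfolding antiwo_def by blast
  have "LM a = m" by (rule LM_eq) (use m in \<open>auto simp: ssupp_def\<close>)
  moreover have "ssupp a \<subseteq> G" using assms(1) unfolding Kser_def by blast
  ultimately show ?thesis using m unfolding ssupp_def by auto
qed

lemma D_smon:
  assumes "g \<in> G" "g \<noteq> mone"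
  shows "D (smon g) \<in> Kser G" "D (smon g) \<noteq> szero"
proof -
  have "\<forall>a\<in>Kser G. D a \<in> Kser G" using sd[unfolded series_derivation_def] by (rule conjunct1)
  then show "D (smon g) \<in> Kser G" using smon_Kser[OF assms(1)] by blast
  have "\<not> (\<exists>c. smon g = sscale c sone)"
  proof
    assume "\<exists>c. smon g = sscale c sone"
    then obtain c where "smon g = sscale c sone" by blast
    then have "smon g g = sscale c sone g" by simp
    then show False using assms(2) unfolding smon_def sscale_def sone_def by (simp only: if_True if_False refl)
  qed
  moreover have H: "\<forall>a\<in>Kser G. D a = szero \<longleftrightarrow> (\<exists>c. a = sscale c sone)"
    using ht[unfolded hardy_type_def] by (rule conjunct1)
  have E: "D (smon g) = szero \<longleftrightarrow> (\<exists>c. smon g = sscale c sone)"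
    using bspec[OF H smon_Kser[OF assms(1)]] .
  ultimately show "D (smon g) \<noteq> szero" using E by (simp only: not_False_eq_True)
qed

definition Lm where "Lm g = LM (D (smon g))"

lemma Lm_prop:
  assumes "g \<in> G" "g \<noteq> mone"
  shows "D (smon g) (Lm g) \<noteq> 0 \<and> (\<forall>n. D (smon g) n \<noteq> 0 \<longrightarrow> mle n (Lm g)) \<and> Lm g \<in> G"
  unfolding Lm_def using LM_ex D_smon[OF assms] by blast

lemma theta_eq: "p \<in> Phi \<Longrightarrow> theta D p = mdiv (Lm (fund p)) (fund p)"
proof -
  assume p: "p \<in> Phi"
  have "fund p \<noteq> mone" using isTop_maxsupp(2)[OF fund_top] by blast
  then have "D (smon (fund p)) (Lm (fund p)) \<noteq> 0" "\<forall>n. D (smon (fund p)) n \<noteq> 0 \<longrightarrow> mle n (Lm (fund p))"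
    using Lm_prop G_fund p by blast+
  then show ?thesis unfolding theta_def fdl_def by (rule LM_shift)
qed

lemma theta_G: "p \<in> Phi \<Longrightarrow> theta D p \<in> G"
proof -
  assume p: "p \<in> Phi"
  have "fund p \<noteq> mone" using isTop_maxsupp(2)[OF fund_top] by blast
  then have "Lm (fund p) \<in> G" using Lm_prop G_fund p by blast
  then show ?thesis using theta_eq[OF p] G_div G_fund[OF p] by simp
qed

lemma hd3:
  assumes "g \<in> G" "d \<in> G" "mless (absm d) (absm g)" "mless mone (absm d)"
  shows "mle (mdiv (Lm d) d) (mdiv (Lm g) g) \<and> (mdiv (Lm g) g = mdiv (Lm d) d \<longleftrightarrow> LF (absm g) = LF (absm d))"
proof -
  have H: "\<forall>a\<in>Kser G. \<forall>b\<in>Kser G. a \<noteq> szero \<longrightarrow> b \<noteq> szero \<longrightarrow>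
        mless (sabs b) (sabs a) \<longrightarrow> mless mone (sabs b) \<longrightarrow>
        (mle (LM_logder D b) (LM_logder D a) \<and>
         (LM_logder D a = LM_logder D b \<longleftrightarrow> LF (sabs a) = LF (sabs b)))"
    using ht[unfolded hardy_type_def] by (rule conjunct2[OF conjunct2])
  have "mle (LM_logder D (smon d)) (LM_logder D (smon g)) \<and>
         (LM_logder D (smon g) = LM_logder D (smon d) \<longleftrightarrow> LF (sabs (smon g)) = LF (sabs (smon d)))"
    using H[rule_format, OF smon_Kser[OF assms(1)] smon_Kser[OF assms(2)] smon_nz smon_nz] assms(3,4)
    unfolding sabs_def LM_smon by blast
  then show ?thesis unfolding sabs_def LM_smon LM_logder_def Lm_def .
qed

lemma hd2:
  assumes "g \<in> G" "d \<in> G" "g \<noteq> mone" "d \<noteq> mone"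
  shows "mle g d \<longleftrightarrow> mle (Lm g) (Lm d)"
proof -
  have "LM sone = mone" unfolding sone_def by (rule LM_smon)
  then have "\<not> ser_asymp (smon g) sone" "\<not> ser_asymp (smon d) sone"
    using assms(3,4) unfolding ser_asymp_def LM_smon by auto
  moreover have H: "\<forall>a\<in>Kser G. \<forall>b\<in>Kser G. a \<noteq> szero \<longrightarrow> b \<noteq> szero \<longrightarrow>
        \<not> ser_asymp a sone \<longrightarrow> \<not> ser_asymp b sone \<longrightarrow>
        (ser_le a b \<longleftrightarrow> ser_le (D a) (D b))"
    using ht[unfolded hardy_type_def] by (rule conjunct1[OF conjunct2])
  ultimately have "ser_le (smon g) (smon d) \<longleftrightarrow> ser_le (D (smon g)) (D (smon d))"
    using H[rule_format, OF smon_Kser[OF assms(1)] smon_Kser[OF assms(2)] smon_nz smon_nz] by blast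
  then show ?thesis unfolding ser_le_def LM_smon Lm_def .
qed

lemma absm_facts:
  assumes "g \<in> G" "g \<noteq> mone"
  shows "mpos (absm g) \<and> absm g \<in> G \<and> maxsupp (absm g) = maxsupp g \<and> mless mone (absm g)"
proof -
  have t: "isTop g (maxsupp g)" using hahn_top G_hahn assms by blast
  have A: "mpos (absm g) \<and> (absm g = g \<or> absm g = minv g)"
  proof (cases "g (maxsupp g) > 0")
    case True
    then have "mpos g" using mpos_I t by blast
    then show ?thesis using absm_pos[of g] by simp
  next
    case False
    then have "g (maxsupp g) < 0" using t unfolding isTop_def by linarith
    then have "\<not> mpos g" using not_mpos_I t by blast
    then have "\<not> mle mone g" unfolding mle_def mless_def mdiv_mone using assms(2) by auto
    then have e: "absm g = minv g" unfolding absm_def by simp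
    have "isTop (minv g) (maxsupp g)" using t unfolding isTop_def by simp
    then have "mpos (minv g)" using mpos_I[of "minv g" "maxsupp g"] \<open>g (maxsupp g) < 0\<close> by simp
    then show ?thesis using e by simp
  qed
  then have "absm g \<in> G" "maxsupp (absm g) = maxsupp g" using assms(1) G_inv[OF assms(1)] maxsupp_minv[of g] by auto
  then show ?thesis using A unfolding mless_def mdiv_mone by blast
qed

lemma same_top:
  assumes "g \<in> G" "g \<noteq> mone" "d \<in> G" "d \<noteq> mone" "maxsupp g = maxsupp d"
  shows "mdiv (Lm g) g = mdiv (Lm d) d"
proof -
  define a where "a = absm g"
  define b where "b = absm d"
  define t where "t = maxsupp g"
  have fa: "mpos a" "a \<in> G" "maxsupp a = t" "mless mone a" using absm_facts[OF assms(1,2)] unfolding a_def t_def by auto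
  have fb: "mpos b" "b \<in> G" "maxsupp b = t" "mless mone b" using absm_facts[OF assms(3,4)] assms(5) unfolding b_def t_def by auto
  have ta: "isTop a t" "a t > 0" using mpos_top[OF G_hahn[OF fa(2)] fa(1)] unfolding fa(3) by auto
  have tb: "isTop b t" "b t > 0" using mpos_top[OF G_hahn[OF fb(2)] fb(1)] unfolding fb(3) by auto
  define z where "z = mmul a b"
  have tz: "isTop z t" using ta tb unfolding isTop_def z_def by auto
  have zp: "z t > 0" using ta tb unfolding z_def by simp
  have zG: "z \<in> G" using G_mul fa fb unfolding z_def by blast
  have mz: "mpos z" using mpos_I tz zp by blast
  have az: "absm z = z" using absm_pos mz by blast
  have LFz: "LF z = fund t" using isTop_maxsupp[OF tz] unfolding LF_def by simp
  have LFa: "LF a = fund t" using fa isTop_maxsupp[OF ta(1)] unfolding LF_def by simp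
  have LFb: "LF b = fund t" using fb isTop_maxsupp[OF tb(1)] unfolding LF_def by simp
  have "mdiv z a = b" "mdiv z b = a" unfolding z_def by (auto simp: fun_eq_iff)
  then have "mless a z" "mless b z" using fa fb unfolding mless_def by auto
  then have "mless (absm g) (absm z)" "mless (absm d) (absm z)" using az a_def b_def by auto
  then have "mdiv (Lm z) z = mdiv (Lm g) g" "mdiv (Lm z) z = mdiv (Lm d) d"
    using conjunct2[OF hd3[OF zG assms(1)]] conjunct2[OF hd3[OF zG assms(3)]] fa(4) fb(4) LFz LFa LFb az
    unfolding a_def[symmetric] b_def[symmetric] by auto
  then show ?thesis by simp
qed

lemma logder_top:
  assumes "g \<in> G" "g \<noteq> mone"
  shows "mdiv (Lm g) g = theta D (maxsupp g)" "maxsupp g \<in> Phi"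
proof -
  show P: "maxsupp g \<in> Phi" using hahn_top G_hahn assms by blast
  let ?t = "maxsupp g"
  have "maxsupp (fund ?t) = ?t" "fund ?t \<noteq> mone" using isTop_maxsupp[OF fund_top] by auto
  then show "mdiv (Lm g) g = theta D (maxsupp g)"
    using same_top[OF assms G_fund[OF P]] theta_eq[OF P] by simp
qed

lemma Bmono:
  assumes "p \<in> Phi" "q \<in> Phi" "p < q"
  shows "mless (theta D p) (theta D q)"
proof -
  have aq: "absm (fund q) = fund q" "absm (fund p) = fund p" using absm_pos[OF fund_pos] by blast+
  have "isTop (mdiv (fund q) (fund p)) q" using assms(3) unfolding isTop_def fund_def by auto
  moreover have "mdiv (fund q) (fund p) q > 0" using assms(3) by (simp add: fund_def)
  ultimately have c1: "mless (fund p) (fund q)" unfolding mless_def using mpos_I by blast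
  have c2: "mless mone (fund p)" unfolding mless_def mdiv_mone using fund_pos by blast
  have h: "mle (mdiv (Lm (fund p)) (fund p)) (mdiv (Lm (fund q)) (fund q)) \<and>
      (mdiv (Lm (fund q)) (fund q) = mdiv (Lm (fund p)) (fund p) \<longleftrightarrow> LF (fund q) = LF (fund p))"
    using hd3[OF G_fund[OF assms(2)] G_fund[OF assms(1)], unfolded aq, OF c1 c2] .
  have "fund q \<noteq> fund p" using fund_inj assms(3) by (metis less_irrefl)
  then have "LF (fund q) \<noteq> LF (fund p)" unfolding LF_fund .
  then have "mdiv (Lm (fund q)) (fund q) \<noteq> mdiv (Lm (fund p)) (fund p)" using conjunct2[OF h] by blast
  then have "mle (theta D p) (theta D q)" "theta D q \<noteq> theta D p"
    using conjunct1[OF h] unfolding theta_eq[OF assms(1)] theta_eq[OF assms(2)] by blast+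
  then show ?thesis unfolding mle_def by metis
qed

end


context hs
begin

lemma Lm_form:
  assumes "g \<in> G" "g \<noteq> mone"
  shows "Lm g = mmul g (theta D (maxsupp g))"
proof -
  have h: "mdiv (Lm g) g = theta D (maxsupp g)" using logder_top[OF assms] by blast
  show ?thesis
  proof (rule ext)
    fix x have "Lm g x - g x = theta D (maxsupp g) x" using fun_cong[OF h, of x] by simp
    then show "Lm g x = mmul g (theta D (maxsupp g)) x" by simp
  qed
qed

lemma Rlem:
  assumes p: "p \<in> Phi" and q: "q \<in> Phi" and pq: "p < q" and qx: "q \<le> x"
  shows "theta D q x = theta D p x"
proof (rule ccontr)
  assume ne: "theta D q x \<noteq> theta D p x"
  define r where "r = mdiv (theta D q) (theta D p)"
  have rG: "r \<in> G" unfolding r_def using G_div theta_G p q by blast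
  have "r x \<noteq> 0" using ne unfolding r_def by simp
  then have rne: "r \<noteq> mone" by auto
  define t where "t = maxsupp r"
  have tr: "isTop r t" and tP: "t \<in> Phi" using hahn_top[OF G_hahn[OF rG] rne] unfolding t_def by auto
  have "x \<le> t" using tr \<open>r x \<noteq> 0\<close> unfolding isTop_def by (metis not_le)
  then have qt: "q \<le> t" using qx by simp
  then have pt: "p < t" using pq by simp
  define g where "g = mdiv (fund p) r"
  have gG: "g \<in> G" unfolding g_def using G_div G_fund[OF p] rG by blast
  have gt: "isTop g t"
    using tr pt unfolding g_def isTop_def by (auto simp: fund_def)
  then have gne: "g \<noteq> mone" and mg: "maxsupp g = t" using isTop_maxsupp by auto
  have fne: "fund p \<noteq> mone" using isTop_maxsupp(2)[OF fund_top] by blast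
  have Lg: "Lm g = mmul g (theta D t)" using Lm_form[OF gG gne] mg by simp
  have Lp: "Lm (fund p) = mmul (fund p) (theta D p)"
    using Lm_form[OF G_fund[OF p] fne] unfolding isTop_maxsupp(1)[OF fund_top[of p]] .
  have "mle (theta D q) (theta D t)"
  proof (cases "q = t")
    case True then show ?thesis by (simp add: mle_def)
  next
    case False then have "q < t" using qt by simp
    then show ?thesis using Bmono[OF q tP] by (simp add: mle_def)
  qed
  then have "mle (mmul (theta D q) g) (mmul (theta D t) g)" using mle_trans_mul by blast
  moreover have "mmul (theta D q) g = Lm (fund p)" unfolding Lp g_def r_def by (simp add: fun_eq_iff)
  moreover have "mmul (theta D t) g = Lm g" unfolding Lg by (simp add: fun_eq_iff)
  ultimately have "mle (Lm (fund p)) (Lm g)" by simp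
  then have le: "mle (fund p) g" using hd2[OF G_fund[OF p] gG fne gne] by blast
  have "mpos r" using Bmono[OF p q pq] unfolding mless_def r_def .
  moreover have "mdiv (fund p) g = r" unfolding g_def by (simp add: fun_eq_iff)
  ultimately have "mless g (fund p)" unfolding mless_def by simp
  then show False using mle_antisym le by blast
qed

lemma main:
  assumes aG: "a \<in> G" and nh: "\<forall>t. is_theta_hat Phi G D t \<longrightarrow> a \<noteq> t"
  shows "\<exists>!p. p \<in> Phi \<and> LF (mdiv a (theta D p)) = fund p"
proof -
  define e where "e p = mdiv a (theta D p)" for p
  have eG: "p \<in> Phi \<Longrightarrow> e p \<in> G" for p unfolding e_def using G_div aG theta_G by blast
  have eapp: "e p y = a y - theta D p y" for p y unfolding e_def by simp
  have fix_iff: "LF (e p) = fund p \<longleftrightarrow> isTop (e p) p" if p: "p \<in> Phi" for p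
  proof
    assume L: "LF (e p) = fund p"
    have "fund p \<noteq> mone" using isTop_maxsupp(2)[OF fund_top] by blast
    then have ne: "e p \<noteq> mone" using L unfolding LF_def by auto
    then have "fund (maxsupp (e p)) = fund p" using L unfolding LF_def by simp
    then have "maxsupp (e p) = p" by (rule fund_inj)
    then show "isTop (e p) p" using hahn_top[OF G_hahn[OF eG[OF p]] ne] by simp
  next
    assume "isTop (e p) p"
    then show "LF (e p) = fund p" using isTop_maxsupp[of "e p" p] unfolding LF_def by simp
  qed
  have R: "p \<in> Phi \<Longrightarrow> q \<in> Phi \<Longrightarrow> p < q \<Longrightarrow> q \<le> y \<Longrightarrow> e p y = e q y" for p q y
    unfolding eapp using Rlem[of p q y] by simp
  have uniq: "p = q" if p: "p \<in> Phi" "isTop (e p) p" and q: "q \<in> Phi" "isTop (e q) q" for p q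
  proof (rule ccontr)
    assume "p \<noteq> q"
    then have "p < q \<or> q < p" by auto
    then show False
    proof
      assume "p < q"
      then have "e p q = e q q" "e p q = 0" using R[OF p(1) q(1)] p(2) unfolding isTop_def by auto
      then show False using q(2) unfolding isTop_def by simp
    next
      assume "q < p"
      then have "e q p = e p p" "e q p = 0" using R[OF q(1) p(1)] q(2) unfolding isTop_def by auto
      then show False using p(2) unfolding isTop_def by simp
    qed
  qed
  have ex: "\<exists>p\<in>Phi. isTop (e p) p"
  proof (rule ccontr)
    assume nf: "\<not> (\<exists>p\<in>Phi. isTop (e p) p)"
    have C: "e p x = 0" if p: "p \<in> Phi" and px: "p \<le> x" for p x
    proof (rule ccontr)
      assume nz: "e p x \<noteq> 0"
      then have ne: "e p \<noteq> mone" by auto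
      define u where "u = maxsupp (e p)"
      have ut: "isTop (e p) u" and uP: "u \<in> Phi" using hahn_top[OF G_hahn[OF eG[OF p]] ne] unfolding u_def by auto
      have "x \<le> u" using ut nz unfolding isTop_def by (metis not_le)
      then have "p \<le> u" using px by simp
      moreover have "u \<noteq> p" using ut nf p by blast
      ultimately have pu: "p < u" by simp
      have "isTop (e u) u"
        using ut R[OF p uP pu] unfolding isTop_def by (metis less_imp_le order_refl)
      then show False using nf uP by blast
    qed
    have "is_theta_hat Phi G D a"
      unfolding is_theta_hat_def
    proof (intro conjI ballI impI)
      show "a \<in> G" by (rule aG)
    next
      fix p assume p: "p \<in> Phi"
      show "mle a (theta D p)"
      proof (rule ccontr)
        assume "\<not> mle a (theta D p)"
        then have "mless (theta D p) a" using total[OF aG theta_G[OF p]] by blast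
        then have mp: "mpos (e p)" unfolding mless_def e_def .
        define c where "c = maxsupp (e p)"
        have ct: "isTop (e p) c" and cpos: "e p c > 0" and cP: "c \<in> Phi"
          using mpos_top[OF G_hahn[OF eG[OF p]] mp] unfolding c_def by auto
        have "\<not> p \<le> c" using C[OF p] ct unfolding isTop_def by blast
        then have cp: "c < p" by simp
        define r where "r = mdiv (theta D p) (theta D c)"
        have mr: "mpos r" using Bmono[OF cP p cp] unfolding mless_def r_def .
        have rapp: "r y = e c y - e p y" for y unfolding r_def eapp by simp
        have "isTop r c" unfolding isTop_def
        proof (intro conjI allI impI)
          show "r c \<noteq> 0" using rapp C[OF cP] cpos by simp
        next
          fix y assume "c < y"
          then show "r y = 0" using rapp C[OF cP, of y] ct unfolding isTop_def by simp
        qed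
        moreover have "r c < 0" using rapp C[OF cP] cpos by simp
        ultimately show False using not_mpos_I mr by blast
      qed
    next
      fix s assume sG: "s \<in> G" and lb: "\<forall>p\<in>Phi. mle s (theta D p)"
      show "mle s a"
      proof (rule ccontr)
        assume "\<not> mle s a"
        then have "mless a s" using total[OF sG aG] by blast
        then have mg: "mpos (mdiv s a)" unfolding mless_def .
        define g where "g = mdiv s a"
        have gG: "g \<in> G" unfolding g_def using G_div sG aG by blast
        define c where "c = maxsupp g"
        have ct: "isTop g c" and cpos: "g c > 0" and cP: "c \<in> Phi"
          using mpos_top[OF G_hahn[OF gG] mg[folded g_def]] unfolding c_def by auto
        define k where "k = mdiv (theta D c) s"
        have kapp: "k y = - e c y - g y" for y unfolding k_def g_def eapp by simp
        have kt: "isTop k c" unfolding isTop_def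
        proof (intro conjI allI impI)
          show "k c \<noteq> 0" using kapp C[OF cP] cpos by simp
        next
          fix y assume "c < y"
          then show "k y = 0" using kapp C[OF cP, of y] ct unfolding isTop_def by simp
        qed
        have kneg: "k c < 0" using kapp C[OF cP] cpos by simp
        have "mle s (theta D c)" using lb cP by blast
        then have "s = theta D c \<or> mpos k" unfolding mle_def mless_def k_def by blast
        then show False
        proof
          assume "s = theta D c"
          then have "k = mone" unfolding k_def by (simp add: fun_eq_iff)
          then show False using isTop_maxsupp(2)[OF kt] by blast
        next
          assume "mpos k" then show False using not_mpos_I[OF kt kneg] by blast
        qed
      qed
    qed
    then show False using nh by blast
  qed
  show ?thesis
  proof (rule ex1I[where a = "SOME p. p \<in> Phi \<and> isTop (e p) p"])
    show "(SOME p. p \<in> Phi \<and> isTop (e p) p) \<in> Phi \<and> LF (mdiv a (theta D (SOME p. p \<in> Phi \<and> isTop (e p) p))) = fund (SOME p. p \<in> Phi \<and> isTop (e p) p)"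
      using someI_ex[of "\<lambda>p. p \<in> Phi \<and> isTop (e p) p"] ex fix_iff unfolding e_def by blast
  next
    fix q assume "q \<in> Phi \<and> LF (mdiv a (theta D q)) = fund q"
    then have q: "q \<in> Phi" "isTop (e q) q" using fix_iff unfolding e_def by blast+
    have "(SOME p. p \<in> Phi \<and> isTop (e p) p) \<in> Phi \<and> isTop (e (SOME p. p \<in> Phi \<and> isTop (e p) p)) (SOME p. p \<in> Phi \<and> isTop (e p) p)"
      using someI_ex[of "\<lambda>p. p \<in> Phi \<and> isTop (e p) p"] ex by blast
    then show "q = (SOME p. p \<in> Phi \<and> isTop (e p) p)" using uniq q by blast
  qed
qed

end

theorem mainTheorem4:
  fixes Phi :: "'a::linorder set" and G :: "'a mono set"
    and D :: "'a ser \<Rightarrow> 'a ser" and \<alpha> :: "'a mono"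
  assumes "value_group Phi G"
    and "series_derivation Phi G D"
    and "hardy_type Phi G D"
    and "\<alpha> \<in> G"
    and "\<forall>t. is_theta_hat Phi G D t \<longrightarrow> \<alpha> \<noteq> t"
  shows "\<exists>!\<psi>. \<psi> \<in> Phi \<and> LF (mdiv \<alpha> (theta D \<psi>)) = fund \<psi>"
proof -
  interpret hs Phi G D using assms(1-3) by unfold_locales
  show ?thesis by (rule main[OF assms(4,5)])
qed

end
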